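(* For every positive integer $n$ and every $r \in [\frac{\sqrt{3}}{4}, \frac{1}{2})$, we have $N_n(r) = \lceil \frac{n}{3} \rceil$.
   Context: For a positive integer $n$, let $\mathcal{P}_n$ denote the family of all sets of $n$ points in the Euclidean plane such that the distance between any two points of the set is at most $1$. For $0 < r \le 1$, let $N_n(r)$ be the largest integer $k$ such that for every $P \in \mathcal{P}_n$ there exists a circle of radius $r$ (i.e. a closed disc of radius $r$) which covers (contains) at least $k$ points of $P$. *)

theory Defs
  imports "HOL-Analysis.Analysis"
begin

definition point_family :: "nat \<Rightarrow> (real^2) set set" where
  "point_family n = {P. finite P \<and> card P = n \<and> (\<forall>x\<in>P. \<forall>y\<in>P. dist x y \<le> 1)}"

definition N :: "nat \<Rightarrow> real \<Rightarrow> nat" where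
  "N n r = (GREATEST k. \<forall>P\<in>point_family n. \<exists>c. card (P \<inter> cball c r) \<ge> k)"

end

theory Submission
  imports Defs
begin


lemma dist2: "dist (x::real^2) y = sqrt ((x$1-y$1)^2 + (x$2-y$2)^2)"
  unfolding dist_vec_def L2_set_def sum_2 dist_real_def by simp

lemma dist2sq: "(dist (x::real^2) y)^2 = (x$1-y$1)^2 + (x$2-y$2)^2"
  unfolding dist2 by simp

definition pp1 :: "real^2 \<Rightarrow> real" where "pp1 x = x$1"
definition pp2 :: "real^2 \<Rightarrow> real" where "pp2 x = (- x$1 + sqrt 3 * x$2)/2"
definition pp3 :: "real^2 \<Rightarrow> real" where "pp3 x = (- x$1 - sqrt 3 * x$2)/2"
definition mk :: "real \<Rightarrow> real \<Rightarrow> real \<Rightarrow> real^2" where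
  "mk z1 z2 z3 = vector [z1, (z2 - z3)/sqrt 3]"

lemma s3: "sqrt 3 * sqrt 3 = (3::real)" by simp
lemma s3': "sqrt 3 * (sqrt 3 * x) = (3::real) * x" by (simp add: mult.assoc[symmetric])

lemma pp_sum: "pp1 x + pp2 x + pp3 x = 0"
  unfolding pp1_def pp2_def pp3_def by (simp add: field_simps)

lemma dist_mk:
  assumes "z1+z2+z3 = 0"
  shows "(dist x (mk z1 z2 z3))^2 = 2/3*((pp1 x - z1)^2 + (pp2 x - z2)^2 + (pp3 x - z3)^2)"
proof -
  have z1: "z1 = -z2-z3" using assms by linarith
  have s: "sqrt 3 \<noteq> (0::real)" by simp
  show ?thesis
    unfolding dist2sq mk_def pp1_def pp2_def pp3_def z1 using s3 s
    by (simp add: power2_eq_square field_simps)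
qed

lemma pp_lip:
  assumes "dist x y \<le> (1::real)"
  shows "\<bar>pp1 x - pp1 y\<bar> \<le> 1" "\<bar>pp2 x - pp2 y\<bar> \<le> 1" "\<bar>pp3 x - pp3 y\<bar> \<le> 1"
proof -
  define d1 where "d1 = x$1 - y$1"
  define d2 where "d2 = x$2 - y$2"
  have D: "d1^2 + d2^2 \<le> 1"
  proof -
    have "(dist x y)^2 \<le> 1" using assms by (simp add: power_le_one)
    then show ?thesis unfolding dist2sq d1_def d2_def .
  qed
  have "(pp1 x - pp1 y)^2 \<le> 1" unfolding pp1_def using D d1_def
    by (smt (verit) zero_le_power2)
  then show "\<bar>pp1 x - pp1 y\<bar> \<le> 1" by (metis abs_le_square_iff abs_one one_power2)
  have e2: "(pp2 x - pp2 y)^2 = d1^2 + d2^2 - (sqrt 3 * d1 + d2)^2/4"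
    unfolding pp2_def d1_def d2_def using s3 by (simp add: power2_eq_square field_simps) (simp add: algebra_simps s3')
  have "(pp2 x - pp2 y)^2 \<le> 1" unfolding e2 using D zero_le_power2[of "sqrt 3 * d1 + d2"] by linarith
  then show "\<bar>pp2 x - pp2 y\<bar> \<le> 1" by (metis abs_le_square_iff abs_one one_power2)
  have e3: "(pp3 x - pp3 y)^2 = d1^2 + d2^2 - (sqrt 3 * d1 - d2)^2/4"
    unfolding pp3_def d1_def d2_def using s3 by (simp add: power2_eq_square field_simps) (simp add: algebra_simps s3')
  have "(pp3 x - pp3 y)^2 \<le> 1" unfolding e3 using D zero_le_power2[of "sqrt 3 * d1 - d2"] by linarith
  then show "\<bar>pp3 x - pp3 y\<bar> \<le> 1" by (metis abs_le_square_iff abs_one one_power2)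
qed



lemma core0:
  fixes u w :: real
  assumes "-1 \<le> u" "u \<le> w" "w \<le> 0" "2*w-u+3/2 \<ge> 0" "2*u-w+3/2\<ge>0" "-1 \<le> w"
  shows "2/3*(u^2-u*w+w^2) + (u+w)/4 \<le> 3/16"
proof -
  define p where "p = -w"
  define q where "q = 2*u-w+3/2"
  have "p \<ge> 0" "q \<ge> 0" "p+q \<le> 3/2" "p \<le> 1" "q - p + 1/2 \<ge> 0" using assms by (auto simp: p_def q_def)
  have e: "3/16 - (2/3*(u^2-u*w+w^2) + (u+w)/4) = q*(3/8 - q/6) + p*(3/8-p/2)"
    unfolding p_def q_def power2_eq_square by (simp add: field_simps)
  have e2: "q*(3/8 - q/6) + p*(3/8-p/2) = 11/48*(q*(3/2-p-q)) + 1/16*(q*(q-p+1/2)) + 1/4*(p*(1-p)) + 1/4*(p*(q-p+1/2)) + 1/24*(p*q)"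
    by (simp add: field_simps)
  have "q*(3/8 - q/6) + p*(3/8-p/2) \<ge> 0"
    unfolding e2 using \<open>p \<ge> 0\<close> \<open>q \<ge> 0\<close> \<open>p+q \<le> 3/2\<close> \<open>p \<le> 1\<close> \<open>q - p + 1/2 \<ge> 0\<close>
    using mult_nonneg_nonneg[of q "3/2-p-q"] mult_nonneg_nonneg[of q "q-p+1/2"] mult_nonneg_nonneg[of p "1-p"]
      mult_nonneg_nonneg[of p "q-p+1/2"] mult_nonneg_nonneg[of p q] by linarith
  with e show ?thesis by linarith
qed

lemma coreY:
  fixes a b c t :: real
  assumes "a+b+c=0" "t \<le> b" "t \<le> c" "a \<le> t+1" "t \<ge> -1/2" "a \<ge> b" "a \<ge> c"
  shows "2/3*((a-1/4)^2+(b+1/8)^2+(c+1/8)^2) \<le> 3/16"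
proof -
  define u where "u = 2*b+c"
  define w where "w = b+2*c"
  have a: "a = -b-c" using assms by linarith
  have e: "2/3*((a-1/4)^2+(b+1/8)^2+(c+1/8)^2) = 2/3*(2/3*(u^2-u*w+w^2) + (u+w)/4 + 3/32)"
    unfolding a u_def w_def power2_eq_square by (simp add: field_simps)
  have c1: "-1 \<le> u" "u \<le> 0" "-1 \<le> w" "w \<le> 0" "2*w-u+3/2 \<ge> 0" "2*u-w+3/2\<ge>0"
    using assms unfolding u_def w_def a by auto
  have "2/3*(u^2-u*w+w^2) + (u+w)/4 \<le> 3/16"
  proof (cases "u \<le> w")
    case True then show ?thesis using core0[of u w] c1 by linarith
  next
    case False then have "2/3*(w^2-w*u+u^2) + (w+u)/4 \<le> 3/16" using core0[of w u] c1 by linarith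
    then show ?thesis by (simp add: algebra_simps)
  qed
  then show ?thesis unfolding e by (simp add: field_simps)
qed

lemma coreYn:
  fixes a b c t :: real
  assumes "a+b+c=0" "t \<le> a" "b \<le> t+1" "c \<le> t+1" "t \<le> -1/2" "a \<le> b" "a \<le> c"
  shows "2/3*((a+1/4)^2+(b-1/8)^2+(c-1/8)^2) \<le> 3/16"
proof -
  have "2/3*((-a-1/4)^2+(-b+1/8)^2+(-c+1/8)^2) \<le> 3/16"
    using coreY[of "-a" "-b" "-c" "-t-1"] assms by simp
  moreover have "(-a-1/4)^2 = (a+1/4)^2" "(-b+1/8)^2 = (b-1/8)^2" "(-c+1/8)^2 = (c-1/8)^2"
    by (simp_all add: power2_eq_square algebra_simps)
  ultimately show ?thesis by simp
qed

lemma in_cball_sq: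
  assumes "(dist x c)^2 \<le> 3/16"
  shows "x \<in> cball c (sqrt 3/4)"
proof -
  have "dist c x = sqrt ((dist x c)^2)" by (simp add: dist_commute)
  also have "\<dots> \<le> sqrt (3/16)" using assms by (rule real_sqrt_le_mono)
  also have "sqrt (3/16) = sqrt 3 / sqrt (4^2)" by (simp add: real_sqrt_divide)
  also have "\<dots> = sqrt 3 / 4" by simp
  finally show ?thesis by simp
qed

lemma cover_pt:
  assumes w: "w1+w2+w3 = 0"
    and b: "t \<le> pp1 x - w1" "pp1 x - w1 \<le> t+1" "t \<le> pp2 x - w2" "pp2 x - w2 \<le> t+1"
       "t \<le> pp3 x - w3" "pp3 x - w3 \<le> t+1"
  shows "t \<ge> -1/2 \<Longrightarrow> x \<in> cball (mk (w1+1/4) (w2-1/8) (w3-1/8)) (sqrt 3/4)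
          \<or> x \<in> cball (mk (w1-1/8) (w2+1/4) (w3-1/8)) (sqrt 3/4)
          \<or> x \<in> cball (mk (w1-1/8) (w2-1/8) (w3+1/4)) (sqrt 3/4)"
   and "t \<le> -1/2 \<Longrightarrow> x \<in> cball (mk (w1-1/4) (w2+1/8) (w3+1/8)) (sqrt 3/4)
          \<or> x \<in> cball (mk (w1+1/8) (w2-1/4) (w3+1/8)) (sqrt 3/4)
          \<or> x \<in> cball (mk (w1+1/8) (w2+1/8) (w3-1/4)) (sqrt 3/4)"
proof -
  define y1 where "y1 = pp1 x - w1"
  define y2 where "y2 = pp2 x - w2"
  define y3 where "y3 = pp3 x - w3"
  have ys: "y1+y2+y3 = 0" using pp_sum[of x] w unfolding y1_def y2_def y3_def by linarith
  have d1: "(dist x (mk (w1+1/4) (w2-1/8) (w3-1/8)))^2 = 2/3*((y1-1/4)^2+(y2+1/8)^2+(y3+1/8)^2)"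
    using dist_mk[of "w1+1/4" "w2-1/8" "w3-1/8" x] w unfolding y1_def y2_def y3_def
    by (simp add: algebra_simps)
  have d2: "(dist x (mk (w1-1/8) (w2+1/4) (w3-1/8)))^2 = 2/3*((y2-1/4)^2+(y3+1/8)^2+(y1+1/8)^2)"
    using dist_mk[of "w1-1/8" "w2+1/4" "w3-1/8" x] w unfolding y1_def y2_def y3_def
    by (simp add: algebra_simps)
  have d3: "(dist x (mk (w1-1/8) (w2-1/8) (w3+1/4)))^2 = 2/3*((y3-1/4)^2+(y1+1/8)^2+(y2+1/8)^2)"
    using dist_mk[of "w1-1/8" "w2-1/8" "w3+1/4" x] w unfolding y1_def y2_def y3_def
    by (simp add: algebra_simps)
  have n1: "(dist x (mk (w1-1/4) (w2+1/8) (w3+1/8)))^2 = 2/3*((y1+1/4)^2+(y2-1/8)^2+(y3-1/8)^2)"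
    using dist_mk[of "w1-1/4" "w2+1/8" "w3+1/8" x] w unfolding y1_def y2_def y3_def
    by (simp add: algebra_simps)
  have n2: "(dist x (mk (w1+1/8) (w2-1/4) (w3+1/8)))^2 = 2/3*((y2+1/4)^2+(y3-1/8)^2+(y1-1/8)^2)"
    using dist_mk[of "w1+1/8" "w2-1/4" "w3+1/8" x] w unfolding y1_def y2_def y3_def
    by (simp add: algebra_simps)
  have n3: "(dist x (mk (w1+1/8) (w2+1/8) (w3-1/4)))^2 = 2/3*((y3+1/4)^2+(y1-1/8)^2+(y2-1/8)^2)"
    using dist_mk[of "w1+1/8" "w2+1/8" "w3-1/4" x] w unfolding y1_def y2_def y3_def
    by (simp add: algebra_simps)
  have bb: "t \<le> y1" "y1 \<le> t+1" "t \<le> y2" "y2 \<le> t+1" "t \<le> y3" "y3 \<le> t+1"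
    using b unfolding y1_def y2_def y3_def by auto
  show "t \<ge> -1/2 \<Longrightarrow> x \<in> cball (mk (w1+1/4) (w2-1/8) (w3-1/8)) (sqrt 3/4)
          \<or> x \<in> cball (mk (w1-1/8) (w2+1/4) (w3-1/8)) (sqrt 3/4)
          \<or> x \<in> cball (mk (w1-1/8) (w2-1/8) (w3+1/4)) (sqrt 3/4)"
  proof -
    assume t: "t \<ge> -1/2"
    consider "y1 \<ge> y2 \<and> y1 \<ge> y3" | "y2 \<ge> y1 \<and> y2 \<ge> y3" | "y3 \<ge> y1 \<and> y3 \<ge> y2" by linarith
    then show ?thesis
    proof cases
      case 1 then have "(dist x (mk (w1+1/4) (w2-1/8) (w3-1/8)))^2 \<le> 3/16" using coreY[of y1 y2 y3 t] ys bb t d1 by simp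
        then show ?thesis using in_cball_sq by blast
    next
      case 2 then have "(dist x (mk (w1-1/8) (w2+1/4) (w3-1/8)))^2 \<le> 3/16" using coreY[of y2 y3 y1 t] ys bb t d2 by simp
        then show ?thesis using in_cball_sq by blast
    next
      case 3 then have "(dist x (mk (w1-1/8) (w2-1/8) (w3+1/4)))^2 \<le> 3/16" using coreY[of y3 y1 y2 t] ys bb t d3 by simp
        then show ?thesis using in_cball_sq by blast
    qed
  qed
  show "t \<le> -1/2 \<Longrightarrow> x \<in> cball (mk (w1-1/4) (w2+1/8) (w3+1/8)) (sqrt 3/4)
          \<or> x \<in> cball (mk (w1+1/8) (w2-1/4) (w3+1/8)) (sqrt 3/4)
          \<or> x \<in> cball (mk (w1+1/8) (w2+1/8) (w3-1/4)) (sqrt 3/4)"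
  proof -
    assume t: "t \<le> -1/2"
    consider "y1 \<le> y2 \<and> y1 \<le> y3" | "y2 \<le> y1 \<and> y2 \<le> y3" | "y3 \<le> y1 \<and> y3 \<le> y2" by linarith
    then show ?thesis
    proof cases
      case 1 then have "(dist x (mk (w1-1/4) (w2+1/8) (w3+1/8)))^2 \<le> 3/16" using coreYn[of y1 y2 y3 t] ys bb t n1 by simp
        then show ?thesis using in_cball_sq by blast
    next
      case 2 then have "(dist x (mk (w1+1/8) (w2-1/4) (w3+1/8)))^2 \<le> 3/16" using coreYn[of y2 y3 y1 t] ys bb t n2 by simp
        then show ?thesis using in_cball_sq by blast
    next
      case 3 then have "(dist x (mk (w1+1/8) (w2+1/8) (w3-1/4)))^2 \<le> 3/16" using coreYn[of y3 y1 y2 t] ys bb t n3 by simp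
        then show ?thesis using in_cball_sq by blast
    qed
  qed
qed



lemma min_bnd:
  assumes "finite P" "P \<noteq> {}" "\<forall>x\<in>P. \<forall>y\<in>P. \<bar>g x - g y\<bar> \<le> (1::real)" "x \<in> P"
  shows "Min (g ` P) \<le> g x" "g x \<le> Min (g ` P) + 1"
proof -
  show "Min (g ` P) \<le> g x" using assms by simp
  have "Min (g ` P) \<in> g ` P" using assms by simp
  then obtain x0 where "x0 \<in> P" "Min (g ` P) = g x0" by auto
  then show "g x \<le> Min (g ` P) + 1" using assms(3,4) by fastforce
qed

lemma cover3:
  fixes P :: "(real^2) set"
  assumes "finite P" "P \<noteq> {}" "\<forall>x\<in>P. \<forall>y\<in>P. dist x y \<le> 1"
  shows "\<exists>c1 c2 c3. \<forall>x\<in>P. x \<in> cball c1 (sqrt 3/4) \<or> x \<in> cball c2 (sqrt 3/4) \<or> x \<in> cball c3 (sqrt 3/4)"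
proof -
  define m1 where "m1 = Min (pp1 ` P)"
  define m2 where "m2 = Min (pp2 ` P)"
  define m3 where "m3 = Min (pp3 ` P)"
  define t where "t = (m1+m2+m3)/3"
  define w1 where "w1 = m1 - t"
  define w2 where "w2 = m2 - t"
  define w3 where "w3 = m3 - t"
  have w: "w1+w2+w3 = 0" unfolding w1_def w2_def w3_def t_def by (simp add: field_simps)
  have L1: "\<forall>x\<in>P. \<forall>y\<in>P. \<bar>pp1 x - pp1 y\<bar> \<le> 1" using assms(3) pp_lip by blast
  have L2: "\<forall>x\<in>P. \<forall>y\<in>P. \<bar>pp2 x - pp2 y\<bar> \<le> 1" using assms(3) pp_lip by blast
  have L3: "\<forall>x\<in>P. \<forall>y\<in>P. \<bar>pp3 x - pp3 y\<bar> \<le> 1" using assms(3) pp_lip by blast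
  have B: "t \<le> pp1 x - w1 \<and> pp1 x - w1 \<le> t+1 \<and> t \<le> pp2 x - w2 \<and> pp2 x - w2 \<le> t+1
       \<and> t \<le> pp3 x - w3 \<and> pp3 x - w3 \<le> t+1" if "x \<in> P" for x
    using min_bnd[OF assms(1,2) L1 that] min_bnd[OF assms(1,2) L2 that] min_bnd[OF assms(1,2) L3 that]
    unfolding w1_def w2_def w3_def m1_def[symmetric] m2_def[symmetric] m3_def[symmetric] by linarith
  show ?thesis
  proof (cases "t \<ge> -1/2")
    case True
    show ?thesis
      apply (rule exI[of _ "mk (w1+1/4) (w2-1/8) (w3-1/8)"], rule exI[of _ "mk (w1-1/8) (w2+1/4) (w3-1/8)"],
          rule exI[of _ "mk (w1-1/8) (w2-1/8) (w3+1/4)"], intro ballI)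
      subgoal premises pr for x
      proof -
        have b: "t \<le> pp1 x - w1" "pp1 x - w1 \<le> t+1" "t \<le> pp2 x - w2" "pp2 x - w2 \<le> t+1"
          "t \<le> pp3 x - w3" "pp3 x - w3 \<le> t+1" using B[OF pr] by auto
        show ?thesis using cover_pt(1)[OF w b] True by simp
      qed
      done
  next
    case False
    show ?thesis
      apply (rule exI[of _ "mk (w1-1/4) (w2+1/8) (w3+1/8)"], rule exI[of _ "mk (w1+1/8) (w2-1/4) (w3+1/8)"],
          rule exI[of _ "mk (w1+1/8) (w2+1/8) (w3-1/4)"], intro ballI)
      subgoal premises pr for x
      proof -
        have b: "t \<le> pp1 x - w1" "pp1 x - w1 \<le> t+1" "t \<le> pp2 x - w2" "pp2 x - w2 \<le> t+1"
          "t \<le> pp3 x - w3" "pp3 x - w3 \<le> t+1" using B[OF pr] by auto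
        show ?thesis using cover_pt(2)[OF w b] False by simp
      qed
      done
  qed
qed

lemma ceil3: "nat \<lceil>real n / 3\<rceil> = (n+2) div 3"
proof -
  define q where "q = (n+2) div 3"
  have "\<lceil>real n / 3\<rceil> = int q"
  proof (rule ceiling_unique)
    have b: "3 * q \<le> n+2" "n \<le> 3 * q"
      unfolding q_def using mod_less_divisor[of 3 "n+2"] div_mult_mod_eq[of "n+2" 3] by linarith+
    have "real (3 * q) \<le> real (n+2)" "real n \<le> real (3 * q)" using b by (simp_all only: of_nat_le_iff)
    then have a: "3 * real q \<le> real n+2" "real n \<le> 3 * real q" by simp_all
    show "real_of_int (int q) - 1 < real n / 3" using a(1) by simp
    show "real n / 3 \<le> real_of_int (int q)" using a(2) by simp
  qed
  then show ?thesis unfolding q_def by simp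
qed

lemma lower:
  assumes "P \<in> point_family n" "n \<ge> 1" "sqrt 3/4 \<le> r"
  shows "\<exists>c. card (P \<inter> cball c r) \<ge> (n+2) div 3"
proof -
  have P: "finite P" "card P = n" "\<forall>x\<in>P. \<forall>y\<in>P. dist x y \<le> 1"
    using assms(1) unfolding point_family_def by auto
  have "P \<noteq> {}" using P assms(2) by auto
  then obtain c1 c2 c3 where C: "\<forall>x\<in>P. x \<in> cball c1 (sqrt 3/4) \<or> x \<in> cball c2 (sqrt 3/4) \<or> x \<in> cball c3 (sqrt 3/4)"
    using cover3[OF P(1) _ P(3)] by blast
  have sub: "cball c (sqrt 3/4) \<subseteq> cball c r" for c :: "real^2" using assms(3) by auto
  have e: "P = (P \<inter> cball c1 r) \<union> (P \<inter> cball c2 r) \<union> (P \<inter> cball c3 r)"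
    using C sub by blast
  have "card P = card ((P \<inter> cball c1 r) \<union> (P \<inter> cball c2 r) \<union> (P \<inter> cball c3 r))"
    by (rule arg_cong[OF e])
  then have "n \<le> card (P \<inter> cball c1 r) + card (P \<inter> cball c2 r) + card (P \<inter> cball c3 r)"
    using card_Un_le[of "P \<inter> cball c1 r \<union> P \<inter> cball c2 r" "P \<inter> cball c3 r"]
      card_Un_le[of "P \<inter> cball c1 r" "P \<inter> cball c2 r"] P(2) by linarith
  moreover have "\<not> (n \<le> a + b + c)" if "a < (n+2) div 3" "b < (n+2) div 3" "c < (n+2) div 3" for a b c :: nat
  proof -
    have "3 * ((n+2) div 3) \<le> n+2" by simp
    then show ?thesis using that by linarith
  qed
  ultimately show ?thesis by (meson not_le)
qed



definition VV :: "nat \<Rightarrow> real^2" where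
  "VV k = (if k = 0 then vector [0, 1/sqrt 3] else if k = 1 then vector [-1/2, -1/(2 * sqrt 3)]
           else vector [1/2, -1/(2 * sqrt 3)])"

lemma hh: "(1/sqrt 3) * (1/sqrt 3) = (1/3::real)"
  by (simp add: divide_simps)

lemma distV:
  fixes k l :: nat and a b :: real
  assumes "k < 3" "l < 3"
  shows "(dist (a *\<^sub>R VV k) (b *\<^sub>R VV l))^2 = (if k = l then (a-b)^2/3 else (a^2+a*b+b^2)/3)"
proof -
  define h where "h = 1/sqrt (3::real)"
  have h: "h*h = 1/3" unfolding h_def by (rule hh)
  have h2: "1/(2 * sqrt 3) = h/2" unfolding h_def by simp
  have V: "VV k = (if k = 0 then vector [0, h] else if k = 1 then vector [-1/2, -h/2]
           else vector [1/2, -h/2])" for k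
    unfolding VV_def h2 h_def by (simp add: mult.commute)
  have k: "k = 0 \<or> k = 1 \<or> k = 2" and l: "l = 0 \<or> l = 1 \<or> l = 2" using assms by auto
  have h3: "h*(h*3) = 1" using h by simp
  have hh3: "a*(b*(h*h)) = a*b/3" "a*(a*(h*h)) = a*a/3" "b*(b*(h*h)) = b*b/3" for a b using h by simp_all
  show ?thesis
    using k l unfolding dist2sq V
    using h h3 by (auto simp: power2_eq_square algebra_simps h hh3 h3 field_simps)
qed

lemma card_class:
  assumes "k < 3"
  shows "card {i\<in>{..<n}. i mod 3 = k} \<le> (n+2) div 3"
proof -
  have "{i\<in>{..<n}. i mod 3 = k} \<subseteq> (\<lambda>m. 3*m + k) ` {..<(n+2) div 3}"
  proof
    fix i assume "i \<in> {i\<in>{..<n}. i mod 3 = k}"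
    then have i: "i < n" "i mod 3 = k" by auto
    have "i = 3*(i div 3) + k" using i(2) by presburger
    moreover have "i div 3 < (n+2) div 3" using i(1) by presburger
    ultimately show "i \<in> (\<lambda>m. 3*m + k) ` {..<(n+2) div 3}" by blast
  qed
  then have "card {i\<in>{..<n}. i mod 3 = k} \<le> card ((\<lambda>m. 3*m + k) ` {..<(n+2) div 3})"
    by (intro card_mono) auto
  also have "\<dots> \<le> (n+2) div 3" using card_image_le[of "{..<(n+2) div 3}" "\<lambda>m. 3*m + k"] by simp
  finally show ?thesis .
qed

lemma upper:
  assumes "n \<ge> 1" "0 < r" "r < 1/2"
  shows "\<exists>P\<in>point_family n. \<forall>c. card (P \<inter> cball c r) \<le> (n+2) div 3"
proof -
  define \<delta> where "\<delta> = (1 - 2*r)/2"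
  define \<epsilon> where "\<epsilon> = \<delta> / (real n + 1)"
  define al where "al i = 1 - \<epsilon> * real (i div 3)" for i :: nat
  define f where "f i = al i *\<^sub>R VV (i mod 3)" for i
  have dpos: "0 < \<delta>" "\<delta> < 1" using assms unfolding \<delta>_def by auto
  have epos: "0 < \<epsilon>" unfolding \<epsilon>_def using dpos by simp
  have gap: "2*r < 1 - \<delta>" using assms(3) unfolding \<delta>_def by (simp add: field_simps)
  have alb: "1 - \<delta> < al i" "al i \<le> 1" if "i < n" for i
  proof -
    have "real (i div 3) \<le> real n" using that by simp
    then have "\<epsilon> * real (i div 3) \<le> \<epsilon> * real n" using epos by (simp add: mult_left_mono)
    also have "\<epsilon> * real n < \<delta>" unfolding \<epsilon>_def using dpos by (simp add: field_simps)
    finally show "1 - \<delta> < al i" unfolding al_def by simp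
    show "al i \<le> 1" unfolding al_def using epos by simp
  qed
  have same: "(dist (f i) (f j))^2 = (al i - al j)^2/3" if "i mod 3 = j mod 3" for i j
    unfolding f_def using distV[of "i mod 3" "j mod 3" "al i" "al j"] that by simp
  have diff: "(dist (f i) (f j))^2 = ((al i)^2 + al i * al j + (al j)^2)/3" if "i mod 3 \<noteq> j mod 3" for i j
    unfolding f_def using distV[of "i mod 3" "j mod 3" "al i" "al j"] that by simp
  have le1: "dist (f i) (f j) \<le> 1" if "i < n" "j < n" for i j
  proof -
    have a: "1 - \<delta> < al i" "al i \<le> 1" "1 - \<delta> < al j" "al j \<le> 1" using alb that by auto
    have "(dist (f i) (f j))^2 \<le> 1^2"
    proof (cases "i mod 3 = j mod 3")
      case True
      have "\<bar>al i - al j\<bar> \<le> 1" using a dpos by auto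
      then have "(al i - al j)^2 \<le> 1" by (metis abs_le_square_iff abs_one one_power2)
      then show ?thesis using same[OF True] by simp
    next
      case False
      have "(al i)^2 \<le> 1" "(al j)^2 \<le> 1" "al i * al j \<le> 1" using a dpos
        by (auto intro: mult_le_one simp: power_le_one)
      then show ?thesis using diff[OF False] by simp
    qed
    then show ?thesis by (rule power2_le_imp_le) simp
  qed
  have ge: "1 - \<delta> \<le> dist (f i) (f j)" if "i < n" "j < n" "i mod 3 \<noteq> j mod 3" for i j
  proof -
    have a: "1 - \<delta> \<le> al i" "1 - \<delta> \<le> al j" using alb that by (auto intro: less_imp_le)
    have p: "0 \<le> 1 - \<delta>" using dpos by simp
    have "(1-\<delta>)^2 \<le> (al i)^2" "(1-\<delta>)^2 \<le> (al j)^2" using a p by (auto intro: power_mono)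
    moreover have "(1-\<delta>)^2 \<le> al i * al j" unfolding power2_eq_square using a p by (intro mult_mono) auto
    ultimately have "(1-\<delta>)^2 \<le> (dist (f i) (f j))^2" using diff[OF that(3)] by simp
    then show ?thesis by (rule power2_le_imp_le) simp
  qed
  have inj: "inj_on f {..<n}"
  proof (rule inj_onI)
    fix i j assume ij: "i \<in> {..<n}" "j \<in> {..<n}" "f i = f j"
    show "i = j"
    proof (cases "i mod 3 = j mod 3")
      case True
      then have "(al i - al j)^2/3 = 0" using same[OF True] ij by simp
      then have "al i = al j" by simp
      then have "real (i div 3) = real (j div 3)" unfolding al_def using epos by simp
      then have "i div 3 = j div 3" by simp
      with True show ?thesis by (metis div_mult_mod_eq)
    next
      case False
      then have "1 - \<delta> \<le> 0" using ge[of i j] ij by simp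
      then show ?thesis using dpos by simp
    qed
  qed
  define P where "P = f ` {..<n}"
  have PF: "P \<in> point_family n"
    unfolding point_family_def P_def using inj le1 by (auto simp: card_image)
  have "card (P \<inter> cball c r) \<le> (n+2) div 3" for c
  proof (cases "P \<inter> cball c r = {}")
    case True then show ?thesis by simp
  next
    case False
    then obtain i0 where i0: "i0 < n" "f i0 \<in> cball c r" unfolding P_def by auto
    have "P \<inter> cball c r \<subseteq> f ` {i\<in>{..<n}. i mod 3 = i0 mod 3}"
    proof
      fix x assume x: "x \<in> P \<inter> cball c r"
      then obtain i where i: "i < n" "x = f i" unfolding P_def by auto
      have "dist (f i) (f i0) \<le> dist (f i) c + dist c (f i0)" by (rule dist_triangle)
      also have "\<dots> \<le> 2*r" using x i i0 by (simp add: dist_commute)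
      finally have "dist (f i) (f i0) < 1 - \<delta>" using gap by simp
      then have "i mod 3 = i0 mod 3" using ge[of i i0] i i0 by force
      then show "x \<in> f ` {i\<in>{..<n}. i mod 3 = i0 mod 3}" using i by auto
    qed
    then have "card (P \<inter> cball c r) \<le> card (f ` {i\<in>{..<n}. i mod 3 = i0 mod 3})"
      by (intro card_mono) auto
    also have "\<dots> \<le> card {i\<in>{..<n}. i mod 3 = i0 mod 3}" by (rule card_image_le) simp
    also have "\<dots> \<le> (n+2) div 3" by (rule card_class) simp
    finally show ?thesis .
  qed
  with PF show ?thesis by blast
qed


theorem theorem2:
  fixes n :: nat and r :: real
  assumes "n \<ge> 1" and "sqrt 3 / 4 \<le> r" and "r < 1 / 2"
  shows "N n r = nat \<lceil>real n / 3\<rceil>"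
proof -
  have "0 < sqrt 3 / 4" by simp
  then have rpos: "0 < r" using assms(2) by linarith
  obtain P0 where P0: "P0 \<in> point_family n" "\<forall>c. card (P0 \<inter> cball c r) \<le> (n+2) div 3"
    using upper[OF assms(1) rpos assms(3)] by blast
  have "(GREATEST k. \<forall>P\<in>point_family n. \<exists>c. card (P \<inter> cball c r) \<ge> k) = (n+2) div 3"
  proof (rule Greatest_equality)
    show "\<forall>P\<in>point_family n. \<exists>c. card (P \<inter> cball c r) \<ge> (n+2) div 3"
      using lower assms by blast
  next
    fix k assume "\<forall>P\<in>point_family n. \<exists>c. card (P \<inter> cball c r) \<ge> k"
    then obtain c where "card (P0 \<inter> cball c r) \<ge> k" using P0(1) by blast
    then show "k \<le> (n+2) div 3" using P0(2) order_trans by blast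
  qed
  then show ?thesis unfolding N_def ceil3 .
qed

end
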